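(* Let $K$ be a field of characteristic $p>0$, $k=\bigcap_{n\ge0}K^{p^n}$, with $K/k$ finitely generated. Let $n\ge1$ and let $W_\bullet$ be an $n$-foliation on $K$ of rank $r$. Then there exists an $\infty$-foliation $W'_\bullet$ on $K$ of rank $r$ with $W'_i=W_i$ for all $0\le i\le n$.
   Context: $K^{p^n}=\{x^{p^n}:x\in K\}$; $A\cdot B$ is the composite. A power tower on $K$ is a sequence of subfields $W_0,W_1,\ldots$ with $W_j=W_i\cdot K^{p^j}$ for all $0\le j\le i$. It has length $n$ if $n$ is the least integer with $W_N=W_n$ for all $N\ge n$. An $n$-foliation (for an integer $n\ge1$) of rank $r$ is a power tower of length $n$ with $[W_i:W_{i+1}]=p^r$ for all $0\le i<n$. An $\infty$-foliation of rank $r\ge1$ is a power tower with $[W_i:W_{i+1}]=p^r$ for all $i\ge0$. *)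

theory Defs
  imports "HOL-Algebra.Algebra"
begin

definition frob_image :: "('a, 'b) ring_scheme \<Rightarrow> nat \<Rightarrow> nat \<Rightarrow> 'a set" where
  "frob_image R p n = (\<lambda>x. x [^]\<^bsub>R\<^esub> (p ^ n)) ` carrier R"

definition composite :: "('a, 'b) ring_scheme \<Rightarrow> 'a set \<Rightarrow> 'a set \<Rightarrow> 'a set" where
  "composite R A B = generate_field R (A \<union> B)"

definition perfect_core :: "('a, 'b) ring_scheme \<Rightarrow> nat \<Rightarrow> 'a set" where
  "perfect_core R p = (\<Inter>n. frob_image R p n)"

definition power_tower :: "('a, 'b) ring_scheme \<Rightarrow> nat \<Rightarrow> (nat \<Rightarrow> 'a set) \<Rightarrow> bool" where
  "power_tower R p W \<longleftrightarrow>
     (\<forall>i. subfield (W i) R) \<and>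
     (\<forall>i j. j \<le> i \<longrightarrow> W j = composite R (W i) (frob_image R p j))"

definition tower_length :: "(nat \<Rightarrow> 'a set) \<Rightarrow> nat \<Rightarrow> bool" where
  "tower_length W n \<longleftrightarrow>
     (\<forall>N\<ge>n. W N = W n) \<and> (\<forall>m<n. \<not> (\<forall>N\<ge>m. W N = W m))"

text \<open>[W_i : W_{i+1}] = d, via the library notion of dimension of W_i over W_{i+1}.\<close>
definition ext_degree :: "('a, 'b) ring_scheme \<Rightarrow> 'a set \<Rightarrow> 'a set \<Rightarrow> nat \<Rightarrow> bool" where
  "ext_degree R E F d \<longleftrightarrow> ring.dimension R d F E"

definition n_foliation :: "('a, 'b) ring_scheme \<Rightarrow> nat \<Rightarrow> nat \<Rightarrow> nat \<Rightarrow> (nat \<Rightarrow> 'a set) \<Rightarrow> bool" where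
  "n_foliation R p n r W \<longleftrightarrow>
     power_tower R p W \<and> tower_length W n \<and>
     (\<forall>i<n. ext_degree R (W i) (W (Suc i)) (p ^ r))"

definition inf_foliation :: "('a, 'b) ring_scheme \<Rightarrow> nat \<Rightarrow> nat \<Rightarrow> (nat \<Rightarrow> 'a set) \<Rightarrow> bool" where
  "inf_foliation R p r W \<longleftrightarrow>
     r \<ge> 1 \<and> power_tower R p W \<and> (\<forall>i. ext_degree R (W i) (W (Suc i)) (p ^ r))"

end

theory Submission
  imports Defs
begin


fun (in ring) bsum :: "(nat \<Rightarrow> 'a) \<Rightarrow> nat \<Rightarrow> 'a" where
  "bsum f 0 = f 0"
| "bsum f (Suc n) = bsum f n \<oplus> f (Suc n)"

context cring begin

lemma bsum_closed: "(\<And>k. k \<le> n \<Longrightarrow> f k \<in> carrier R) \<Longrightarrow> bsum f n \<in> carrier R"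
  by (induction n) auto

lemma bsum_cong: "(\<And>k. k \<le> n \<Longrightarrow> f k = g k) \<Longrightarrow> bsum f n = bsum g n"
  by (induction n) auto

lemma bsum_add:
  assumes "\<And>k. f k \<in> carrier R" "\<And>k. g k \<in> carrier R"
  shows "bsum (\<lambda>k. f k \<oplus> g k) n = bsum f n \<oplus> bsum g n"
proof (induction n)
  case 0 then show ?case by simp
next
  case (Suc n)
  have c: "bsum f n \<in> carrier R" "bsum g n \<in> carrier R" using bsum_closed assms by auto
  show ?case using Suc c assms by (simp add: a_ac)
qed

lemma bsum_rmult:
  assumes "\<And>k. f k \<in> carrier R" "c \<in> carrier R"
  shows "bsum f n \<otimes> c = bsum (\<lambda>k. f k \<otimes> c) n"
proof (induction n)
  case 0 then show ?case by simp
next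
  case (Suc n)
  have "bsum f n \<in> carrier R" using bsum_closed assms by auto
  then show ?case using Suc assms by (simp add: l_distr)
qed

lemma bsum_shift:
  assumes "\<And>k. f k \<in> carrier R"
  shows "bsum f (Suc n) = f 0 \<oplus> bsum (\<lambda>k. f (Suc k)) n"
proof (induction n)
  case 0 show ?case unfolding bsum.simps(1) bsum.simps(2)[of f 0] by simp
next
  case (Suc n)
  have c: "bsum (\<lambda>k. f (Suc k)) n \<in> carrier R" using bsum_closed assms by auto
  have "bsum f (Suc (Suc n)) = (f 0 \<oplus> bsum (\<lambda>k. f (Suc k)) n) \<oplus> f (Suc (Suc n))"
    using Suc by simp
  also have "\<dots> = f 0 \<oplus> (bsum (\<lambda>k. f (Suc k)) n \<oplus> f (Suc (Suc n)))"
    using c assms by (simp add: a_assoc)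
  finally show ?case by simp
qed

lemma bsum_only0:
  assumes "f 0 \<in> carrier R" "\<And>k. 0 < k \<Longrightarrow> k \<le> n \<Longrightarrow> f k = \<zero>"
  shows "bsum f n = f 0"
  using assms(2)
proof (induction n)
  case 0 then show ?case by simp
next
  case (Suc n)
  then have "bsum f n = f 0" by simp
  moreover have "f (Suc n) = \<zero>" using Suc.prems by simp
  ultimately show ?case using assms(1) by simp
qed

lemma binomial_cring:
  assumes x: "x \<in> carrier R" and y: "y \<in> carrier R"
  shows "(x \<oplus> y) [^] n = bsum (\<lambda>k. [(n choose k)] \<cdot> (x [^] k \<otimes> y [^] (n - k))) n"
proof (induction n)
  case 0 then show ?case using x y by simp
next
  case (Suc n)
  define A where "A = bsum (\<lambda>k. [(n choose k)] \<cdot> (x [^] Suc k \<otimes> y [^] (n - k))) n"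
  define C where "C = bsum (\<lambda>k. [(n choose Suc k)] \<cdot> (x [^] Suc k \<otimes> y [^] (n - k))) n"
  have AC: "A \<in> carrier R" "C \<in> carrier R" unfolding A_def C_def by (auto intro!: bsum_closed simp: x y)
  have yp: "y [^] Suc n \<in> carrier R" using y by simp
  have e0: "(x \<oplus> y) [^] Suc n = (x \<oplus> y) [^] n \<otimes> x \<oplus> (x \<oplus> y) [^] n \<otimes> y"
    using x y by (simp add: r_distr)
  have e1: "(x \<oplus> y) [^] n \<otimes> x = A"
  proof -
    have "(x \<oplus> y) [^] n \<otimes> x = bsum (\<lambda>k. [(n choose k)] \<cdot> (x [^] k \<otimes> y [^] (n - k)) \<otimes> x) n"
      unfolding Suc by (rule bsum_rmult) (auto simp: x y)
    also have "\<dots> = A" unfolding A_def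
    proof (rule bsum_cong)
      fix k assume "k \<le> n"
      have "x [^] k \<otimes> y [^] (n - k) \<otimes> x = x [^] Suc k \<otimes> y [^] (n - k)"
        using x y by (simp add: m_ac)
      then show "[(n choose k)] \<cdot> (x [^] k \<otimes> y [^] (n - k)) \<otimes> x = [(n choose k)] \<cdot> (x [^] Suc k \<otimes> y [^] (n - k))"
        using x y by (simp add: add_pow_ldistr)
    qed
    finally show ?thesis .
  qed
  have e2: "(x \<oplus> y) [^] n \<otimes> y = bsum (\<lambda>k. [(n choose k)] \<cdot> (x [^] k \<otimes> y [^] (Suc n - k))) n"
  proof -
    have "(x \<oplus> y) [^] n \<otimes> y = bsum (\<lambda>k. [(n choose k)] \<cdot> (x [^] k \<otimes> y [^] (n - k)) \<otimes> y) n"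
      unfolding Suc by (rule bsum_rmult) (auto simp: x y)
    also have "\<dots> = bsum (\<lambda>k. [(n choose k)] \<cdot> (x [^] k \<otimes> y [^] (Suc n - k))) n"
    proof (rule bsum_cong)
      fix k assume "k \<le> n"
      then have "Suc n - k = Suc (n - k)" by simp
      then show "[(n choose k)] \<cdot> (x [^] k \<otimes> y [^] (n - k)) \<otimes> y = [(n choose k)] \<cdot> (x [^] k \<otimes> y [^] (Suc n - k))"
        using x y by (simp add: add_pow_ldistr m_assoc)
    qed
    finally show ?thesis .
  qed
  have e3: "bsum (\<lambda>k. [(n choose k)] \<cdot> (x [^] k \<otimes> y [^] (Suc n - k))) n
           = bsum (\<lambda>k. [(n choose k)] \<cdot> (x [^] k \<otimes> y [^] (Suc n - k))) (Suc n)"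
  proof -
    have "bsum (\<lambda>k. [(n choose k)] \<cdot> (x [^] k \<otimes> y [^] (Suc n - k))) n \<in> carrier R"
      by (rule bsum_closed) (simp add: x y)
    moreover have "[(n choose Suc n)] \<cdot> (x [^] Suc n \<otimes> y [^] (Suc n - Suc n)) = \<zero>"
      by (simp add: binomial_eq_0)
    ultimately show ?thesis by (simp only: bsum.simps(2)) simp
  qed
  have e4: "bsum (\<lambda>k. [(n choose k)] \<cdot> (x [^] k \<otimes> y [^] (Suc n - k))) (Suc n) = y [^] Suc n \<oplus> C"
    unfolding C_def by (subst bsum_shift) (auto simp: x y)
  have e5: "bsum (\<lambda>k. [(Suc n choose k)] \<cdot> (x [^] k \<otimes> y [^] (Suc n - k))) (Suc n)
      = y [^] Suc n \<oplus> bsum (\<lambda>k. [(Suc n choose Suc k)] \<cdot> (x [^] Suc k \<otimes> y [^] (n - k))) n"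
    by (subst bsum_shift) (auto simp: x y)
  have e6: "bsum (\<lambda>k. [(Suc n choose Suc k)] \<cdot> (x [^] Suc k \<otimes> y [^] (n - k))) n = A \<oplus> C"
  proof -
    let ?z = "\<lambda>k. x [^] Suc k \<otimes> y [^] (n - k)"
    have z: "\<And>k. ?z k \<in> carrier R" using x y by simp
    have "A \<oplus> C = bsum (\<lambda>k. [(n choose k)] \<cdot> ?z k \<oplus> [(n choose Suc k)] \<cdot> ?z k) n"
      unfolding A_def C_def by (rule bsum_add[symmetric]) (simp_all add: x y)
    also have "\<dots> = bsum (\<lambda>k. [(Suc n choose Suc k)] \<cdot> ?z k) n"
    proof (rule bsum_cong)
      fix k
      show "[(n choose k)] \<cdot> ?z k \<oplus> [(n choose Suc k)] \<cdot> ?z k = [(Suc n choose Suc k)] \<cdot> ?z k"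
        using add.nat_pow_mult[OF z[of k], of "n choose k" "n choose Suc k"] by simp
    qed
    finally show ?thesis by simp
  qed
  have l: "(x \<oplus> y) [^] Suc n = A \<oplus> (y [^] Suc n \<oplus> C)"
    by (simp only: e0 e1 e2 e3 e4)
  have r: "bsum (\<lambda>k. [(Suc n choose k)] \<cdot> (x [^] k \<otimes> y [^] (Suc n - k))) (Suc n) = y [^] Suc n \<oplus> (A \<oplus> C)"
    by (simp only: e5 e6)
  show ?case unfolding l r using AC yp by (simp add: a_ac)
qed

lemma char_mult_zero:
  assumes ch: "[(p::nat)] \<cdot> \<one> = \<zero>" and z: "z \<in> carrier R"
  shows "[(p * m)] \<cdot> z = \<zero>"
proof -
  have "[p] \<cdot> z = [p] \<cdot> \<one> \<otimes> z" using add_pow_ldistr[of \<one> z p] z by simp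
  then have pz: "[p] \<cdot> z = \<zero>" using ch z by simp
  have "[(p * m)] \<cdot> z = [m] \<cdot> ([p] \<cdot> z)" using add.nat_pow_pow[OF z, of m p] by simp
  then show ?thesis using pz by simp
qed

lemma freshman:
  assumes p: "Factorial_Ring.prime (p::nat)" and ch: "[p] \<cdot> \<one> = \<zero>"
    and x: "x \<in> carrier R" and y: "y \<in> carrier R"
  shows "(x \<oplus> y) [^] p = x [^] p \<oplus> y [^] p"
proof -
  have p0: "p \<noteq> 0" using p by (metis not_prime_0)
  then obtain q where q: "p = Suc q" by (cases p) simp_all
  let ?T = "\<lambda>k. [(p choose k)] \<cdot> (x [^] k \<otimes> y [^] (p - k))"
  have "(x \<oplus> y) [^] p = bsum ?T p"
    using binomial_cring[OF x y, of p] by simp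
  also have "bsum ?T p = bsum ?T q \<oplus> ?T p"
    unfolding q by (simp only: bsum.simps(2))
  also have "bsum ?T q = ?T 0"
  proof (rule bsum_only0)
    show "?T 0 \<in> carrier R" using x y by simp
    fix k assume k: "0 < k" "k \<le> q"
    then have "p dvd (p choose k)" using dvd_choose_prime[of k p] p q by simp
    then obtain m where m: "p choose k = p * m" by auto
    have "?T k = [(p * m)] \<cdot> (x [^] k \<otimes> y [^] (p - k))" unfolding m ..
    then show "?T k = \<zero>" using char_mult_zero[OF ch] x y by simp
  qed
  also have "?T 0 = y [^] p" using y by simp
  also have "?T p = x [^] p" using x by simp
  finally show ?thesis using x y by (simp add: a_comm)
qed

lemma freshman_pow:
  assumes p: "Factorial_Ring.prime (p::nat)" and ch: "[p] \<cdot> \<one> = \<zero>"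
    and x: "x \<in> carrier R" and y: "y \<in> carrier R"
  shows "(x \<oplus> y) [^] (p ^ m) = x [^] (p ^ m) \<oplus> y [^] (p ^ m)"
proof (induction m)
  case 0 then show ?case using x y by simp
next
  case (Suc m)
  have e: "\<And>z. z \<in> carrier R \<Longrightarrow> z [^] (p ^ Suc m) = (z [^] (p ^ m)) [^] p"
    by (simp add: nat_pow_pow mult.commute)
  have "(x \<oplus> y) [^] (p ^ Suc m) = ((x \<oplus> y) [^] (p ^ m)) [^] p"
    using x y e by simp
  also have "\<dots> = (x [^] (p ^ m)) [^] p \<oplus> (y [^] (p ^ m)) [^] p"
    using Suc freshman[OF p ch] x y by simp
  finally show ?case using x y e by simp
qed

lemma freshman_minus:
  assumes p: "Factorial_Ring.prime (p::nat)" and ch: "[p] \<cdot> \<one> = \<zero>"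
    and x: "x \<in> carrier R"
  shows "(\<ominus> x) [^] p = \<ominus> (x [^] p)"
proof -
  have "p \<noteq> 0" using p by (metis not_prime_0)
  then have "\<zero> = (x \<oplus> \<ominus> x) [^] p" using x by (simp add: r_neg nat_pow_zero)
  also have "\<dots> = x [^] p \<oplus> (\<ominus> x) [^] p" using freshman[OF p ch] x by simp
  finally have "x [^] p \<oplus> (\<ominus> x) [^] p = \<zero>" by simp
  then show ?thesis using x by (metis a_inv_closed add.inv_equality a_comm nat_pow_closed)
qed

end



locale pfield = field R for R (structure) +
  fixes p :: nat
  assumes p_prime: "Factorial_Ring.prime p" and charp: "[p] \<cdot> \<one> = \<zero>"
begin

definition frob :: "'a \<Rightarrow> 'a" where "frob x = x [^] p"

lemma p_pos: "p > 0" using p_prime by (metis not_prime_0 gr0I)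

lemma frob_closed [simp]: "x \<in> carrier R \<Longrightarrow> frob x \<in> carrier R"
  unfolding frob_def by simp

lemma frob_add: "x \<in> carrier R \<Longrightarrow> y \<in> carrier R \<Longrightarrow> frob (x \<oplus> y) = frob x \<oplus> frob y"
  unfolding frob_def using freshman[OF p_prime charp] by simp

lemma frob_mult: "x \<in> carrier R \<Longrightarrow> y \<in> carrier R \<Longrightarrow> frob (x \<otimes> y) = frob x \<otimes> frob y"
  unfolding frob_def by (simp add: pow_mult_distrib m_comm)

lemma frob_one [simp]: "frob \<one> = \<one>"
  unfolding frob_def by simp

lemma frob_hom: "frob \<in> ring_hom R R"
  by (rule ring_hom_memI) (auto simp: frob_add frob_mult)

lemma frob_rhr: "ring_hom_ring R R frob"
  using frob_hom by (simp add: ring_hom_ringI2 ring_axioms)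

lemma frob_minus: "x \<in> carrier R \<Longrightarrow> frob (\<ominus> x) = \<ominus> frob x"
  unfolding frob_def using freshman_minus[OF p_prime charp] by simp

lemma pow_nonzero: "x \<in> carrier R \<Longrightarrow> x \<noteq> \<zero> \<Longrightarrow> x [^] (n::nat) \<noteq> \<zero>"
  by (induction n) (auto simp: integral_iff)

lemma frob_zero_iff: "x \<in> carrier R \<Longrightarrow> frob x = \<zero> \<longleftrightarrow> x = \<zero>"
  unfolding frob_def using p_pos pow_nonzero nat_pow_zero by (metis not_gr0)

lemma frob_inj: "inj_on frob (carrier R)"
proof (rule inj_onI)
  fix x y assume x: "x \<in> carrier R" and y: "y \<in> carrier R" and e: "frob x = frob y"
  have "frob (x \<ominus> y) = frob x \<ominus> frob y"
    using x y by (simp add: a_minus_def frob_add frob_minus)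
  also have "\<dots> = \<zero>" using e x y by simp
  finally have "x \<ominus> y = \<zero>" using frob_zero_iff x y by simp
  then show "x = y" using x y by (simp add: r_right_minus_eq)
qed

lemma one_neq_zero: "\<one> \<noteq> \<zero>" by simp

lemma frob_subfield: "subfield K R \<Longrightarrow> subfield (frob ` K) R"
  using ring_hom_ring.img_is_subfield(2)[OF frob_rhr] by simp

lemma frob_pow: "x \<in> carrier R \<Longrightarrow> x [^] (p ^ Suc m) = frob (x [^] (p ^ m))"
  unfolding frob_def by (simp add: nat_pow_pow mult.commute)

lemma frob_image_Suc: "frob_image R p (Suc m) = frob ` frob_image R p m"
  unfolding frob_image_def image_image using frob_pow by (auto simp: image_iff)

lemma frob_image_0: "frob_image R p 0 = carrier R"
  unfolding frob_image_def by auto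

lemma frob_image_subfield: "subfield (frob_image R p m) R"
proof (induction m)
  case 0 then show ?case by (simp add: frob_image_0 carrier_is_subfield)
next
  case (Suc m) then show ?case by (simp add: frob_image_Suc frob_subfield)
qed

lemma frob_image_carrier: "frob_image R p m \<subseteq> carrier R"
  using frob_image_subfield subfieldE(3) by blast

lemma frob_image_mono_Suc: "frob_image R p (Suc m) \<subseteq> frob_image R p m"
proof
  fix y assume "y \<in> frob_image R p (Suc m)"
  then obtain x where x: "x \<in> carrier R" "y = x [^] (p ^ Suc m)" unfolding frob_image_def by auto
  have "y = (x [^] p) [^] (p ^ m)" using x by (simp add: nat_pow_pow mult.commute)
  then show "y \<in> frob_image R p m" unfolding frob_image_def using x by auto
qed

lemma frob_image_mono: "m \<le> k \<Longrightarrow> frob_image R p k \<subseteq> frob_image R p m"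
proof (induction k)
  case 0 then show ?case by simp
next
  case (Suc k) then show ?case using frob_image_mono_Suc by (metis le_Suc_eq order.refl order_trans)
qed

lemma sub_pow_closed: "subring K R \<Longrightarrow> x \<in> K \<Longrightarrow> x [^] (n::nat) \<in> K"
proof (induction n)
  case 0 then show ?case using subringE(3) by simp
next
  case (Suc n)
  then have "x \<in> carrier R" using subringE(1) by blast
  then show ?case using Suc subringE(6)[OF Suc(2)] by simp
qed

lemma frob_in_subfield: "subfield K R \<Longrightarrow> x \<in> K \<Longrightarrow> frob x \<in> K"
  unfolding frob_def using sub_pow_closed subfieldE(1) by blast

end



context pfield begin

lemma gen_min: "subfield E R \<Longrightarrow> U \<subseteq> E \<Longrightarrow> generate_field R U \<subseteq> E"
  using generate_field_min_subfield1 subfieldE(3) by (metis order_trans)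

lemma gen_absorb: "subfield A R \<Longrightarrow> B \<subseteq> A \<Longrightarrow> generate_field R (A \<union> B) = A"
proof -
  assume A: "subfield A R" and B: "B \<subseteq> A"
  have Ac: "A \<subseteq> carrier R" using subfieldE(3)[OF A] .
  show ?thesis
  proof
    show "generate_field R (A \<union> B) \<subseteq> A"
      using gen_min[OF A] B by auto
    show "A \<subseteq> generate_field R (A \<union> B)"
      using generate_field.incl[of _ "A \<union> B" R] by auto
  qed
qed

lemma gen_gen: "U \<subseteq> carrier R \<Longrightarrow> V \<subseteq> carrier R \<Longrightarrow>
   generate_field R (generate_field R U \<union> V) = generate_field R (U \<union> V)"
proof
  assume U: "U \<subseteq> carrier R" and V: "V \<subseteq> carrier R"
  have g: "generate_field R U \<subseteq> carrier R" using generate_field_incl[OF U] .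
  show "generate_field R (generate_field R U \<union> V) \<subseteq> generate_field R (U \<union> V)"
  proof (rule generate_field_min_subfield1)
    show "generate_field R U \<union> V \<subseteq> carrier R" using g V by auto
    show "subfield (generate_field R (U \<union> V)) R" using U V generate_field_is_subfield by auto
    have "generate_field R U \<subseteq> generate_field R (U \<union> V)" using mono_generate_field[of U "U \<union> V"] U V by auto
    then show "generate_field R U \<union> V \<subseteq> generate_field R (U \<union> V)"
      using generate_field.incl[of _ "U \<union> V" R] by auto
  qed
  show "generate_field R (U \<union> V) \<subseteq> generate_field R (generate_field R U \<union> V)"
    using mono_generate_field[of "U \<union> V" "generate_field R U \<union> V"] g V
      generate_field.incl[of _ U R] by auto
qed

lemma gen_subfield: "U \<subseteq> carrier R \<Longrightarrow> subfield (generate_field R U) R"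
  using generate_field_is_subfield by simp

lemma gen_incl: "U \<subseteq> generate_field R U"
proof (rule subsetI)
  fix x assume "x \<in> U" then show "x \<in> generate_field R U" by (rule generate_field.incl)
qed

lemma gen_mono: "I \<subseteq> J \<Longrightarrow> J \<subseteq> carrier R \<Longrightarrow> generate_field R I \<subseteq> generate_field R J"
  by (rule mono_generate_field)

lemma frob_inv: "h \<in> carrier R \<Longrightarrow> h \<noteq> \<zero> \<Longrightarrow> frob (inv h) = inv (frob h)"
proof -
  assume h: "h \<in> carrier R" "h \<noteq> \<zero>"
  then have hi: "inv h \<in> carrier R" "h \<otimes> inv h = \<one>" using field_Units by auto
  then have "frob h \<otimes> frob (inv h) = \<one>" using h frob_mult[of h "inv h"] by simp
  then show ?thesis using comm_inv_char[of "frob h" "frob (inv h)"] h hi by simp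
qed

lemma frob_gen:
  assumes U: "U \<subseteq> carrier R"
  shows "frob ` generate_field R U \<subseteq> generate_field R (frob ` U)"
proof (rule subsetI)
  have FX: "frob ` U \<subseteq> carrier R" using U by auto
  fix y assume "y \<in> frob ` generate_field R U"
  then obtain h where h: "h \<in> generate_field R U" "y = frob h" by auto
  have "frob h \<in> generate_field R (frob ` U)" using h(1)
  proof (induction rule: generate_field.induct)
    case one
    have "\<one> \<in> generate_field R (frob ` U)" by (rule generate_field.one)
    then show ?case by simp
  next
    case (incl h)
    then have "frob h \<in> frob ` U" by simp
    then show ?case by (rule generate_field.incl)
  next
    case (a_inv h)
    then have hc: "h \<in> carrier R" using generate_field_in_carrier[OF U] by blast
    have "\<ominus> frob h \<in> generate_field R (frob ` U)" by (rule generate_field.a_inv[OF a_inv.IH])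
    then show ?case using frob_minus[OF hc] by simp
  next
    case (m_inv h)
    then have hc: "h \<in> carrier R" using generate_field_in_carrier[OF U] by blast
    then have nz: "frob h \<noteq> \<zero>" using m_inv frob_zero_iff by simp
    have "inv frob h \<in> generate_field R (frob ` U)" by (rule generate_field.m_inv[OF m_inv.IH nz])
    then show ?case using frob_inv[OF hc m_inv.hyps(2)] by simp
  next
    case (eng_add h1 h2)
    then have hc: "h1 \<in> carrier R" "h2 \<in> carrier R" using generate_field_in_carrier[OF U] by blast+
    have "frob h1 \<oplus> frob h2 \<in> generate_field R (frob ` U)" by (rule generate_field.eng_add[OF eng_add.IH])
    then show ?case using frob_add[OF hc] by simp
  next
    case (eng_mult h1 h2)
    then have hc: "h1 \<in> carrier R" "h2 \<in> carrier R" using generate_field_in_carrier[OF U] by blast+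
    have "frob h1 \<otimes> frob h2 \<in> generate_field R (frob ` U)" by (rule generate_field.eng_mult[OF eng_mult.IH])
    then show ?case using frob_mult[OF hc] by simp
  qed
  then show "y \<in> generate_field R (frob ` U)" using h(2) by (simp only:)
qed

end



context pfield begin

abbreviation PR where "PR \<equiv> univ_poly R (carrier R)"

lemma PR_cring: "cring PR"
  using univ_poly_is_cring[OF carrier_is_subring] .

lemma PR_domain: "domain PR"
  using univ_poly_is_domain[OF carrier_is_subring] .

lemma poc_rhr: "ring_hom_ring R PR poly_of_const"
  using canonical_embedding_ring_hom[OF carrier_is_subring] by simp

lemma poc_hom: "poly_of_const \<in> ring_hom R PR"
  using canonical_embedding_is_hom[OF carrier_is_subring] by simp

lemma poc_add_pow: "x \<in> carrier R \<Longrightarrow> poly_of_const ([(n::nat)] \<cdot> x) = [n] \<cdot>\<^bsub>PR\<^esub> poly_of_const x"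
proof (induction n)
  case 0
  interpret P: cring PR by (rule PR_cring)
  have "poly_of_const \<zero> = \<zero>\<^bsub>PR\<^esub>" by (simp add: poly_of_const_def univ_poly_zero)
  then show ?case by simp
next
  case (Suc n)
  have "poly_of_const ([Suc n] \<cdot> x) = poly_of_const ([n] \<cdot> x \<oplus> x)" by simp
  also have "\<dots> = poly_of_const ([n] \<cdot> x) \<oplus>\<^bsub>PR\<^esub> poly_of_const x"
    using ring_hom_add[OF poc_hom] Suc.prems by simp
  also have "\<dots> = [Suc n] \<cdot>\<^bsub>PR\<^esub> poly_of_const x"
  proof -
    interpret P: cring PR by (rule PR_cring)
    show ?thesis using Suc by simp
  qed
  finally show ?case .
qed

lemma PR_char: "[p] \<cdot>\<^bsub>PR\<^esub> \<one>\<^bsub>PR\<^esub> = \<zero>\<^bsub>PR\<^esub>"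
proof -
  have "\<one>\<^bsub>PR\<^esub> = poly_of_const \<one>" by (simp add: poly_of_const_def univ_poly_one)
  then have "[p] \<cdot>\<^bsub>PR\<^esub> \<one>\<^bsub>PR\<^esub> = poly_of_const ([p] \<cdot> \<one>)" using poc_add_pow by simp
  also have "\<dots> = poly_of_const \<zero>" using charp by simp
  also have "\<dots> = \<zero>\<^bsub>PR\<^esub>" by (simp add: poly_of_const_def univ_poly_zero)
  finally show ?thesis .
qed

lemma PR_freshman: "a \<in> carrier PR \<Longrightarrow> b \<in> carrier PR \<Longrightarrow>
   (a \<oplus>\<^bsub>PR\<^esub> b) [^]\<^bsub>PR\<^esub> p = a [^]\<^bsub>PR\<^esub> p \<oplus>\<^bsub>PR\<^esub> b [^]\<^bsub>PR\<^esub> p"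
  using cring.freshman[OF PR_cring p_prime PR_char] by simp

lemma univ_pow_eq: "a [^]\<^bsub>K[X]\<^esub> (n::nat) = a [^]\<^bsub>PR\<^esub> n"
  by (simp add: univ_poly_def nat_pow_def)

lemma univ_add_eq: "a \<oplus>\<^bsub>K[X]\<^esub> b = a \<oplus>\<^bsub>PR\<^esub> b"
  by (simp add: univ_poly_def)

lemma univ_mult_eq: "a \<otimes>\<^bsub>K[X]\<^esub> b = a \<otimes>\<^bsub>PR\<^esub> b"
  by (simp add: univ_poly_def)


lemma Q_carrier: "c \<in> carrier R \<Longrightarrow> [\<one>, \<ominus> c] \<in> carrier PR"
  by (simp add: univ_poly_carrier[symmetric] polynomial_def)

lemma Q_eval: "c \<in> carrier R \<Longrightarrow> x \<in> carrier R \<Longrightarrow> eval [\<one>, \<ominus> c] x = x \<ominus> c"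
  by (simp add: a_minus_def)

lemma Qpow:
  assumes c: "c \<in> carrier R"
  shows "[\<one>, \<ominus> c] [^]\<^bsub>PR\<^esub> (n::nat) \<in> carrier PR"
    and "[\<one>, \<ominus> c] [^]\<^bsub>PR\<^esub> n \<noteq> []"
    and "degree ([\<one>, \<ominus> c] [^]\<^bsub>PR\<^esub> n) = n"
    and "lead_coeff ([\<one>, \<ominus> c] [^]\<^bsub>PR\<^esub> n) = \<one>"
    and "roots ([\<one>, \<ominus> c] [^]\<^bsub>PR\<^esub> n) = replicate_mset n c"
    and "x \<in> carrier R \<Longrightarrow> eval ([\<one>, \<ominus> c] [^]\<^bsub>PR\<^esub> n) x = (x \<ominus> c) [^] n"
proof -
  interpret P: domain PR by (rule PR_domain)
  let ?Q = "[\<one>, \<ominus> c]"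
  have Q: "?Q \<in> carrier PR" using Q_carrier[OF c] .
  show c1: "?Q [^]\<^bsub>PR\<^esub> n \<in> carrier PR" using Q by simp
  show c2: "?Q [^]\<^bsub>PR\<^esub> n \<noteq> []" using polynomial_pow_not_zero[OF Q] by simp
  show "degree (?Q [^]\<^bsub>PR\<^esub> n) = n" using polynomial_pow_degree[OF Q] by simp
  show "lead_coeff (?Q [^]\<^bsub>PR\<^esub> n) = \<one>"
  proof (induction n)
    case 0 then show ?case by (simp add: univ_poly_one)
  next
    case (Suc n)
    have "?Q [^]\<^bsub>PR\<^esub> Suc n = poly_mult (?Q [^]\<^bsub>PR\<^esub> n) ?Q"
      using Q by (simp add: univ_poly_mult)
    moreover have "lead_coeff (poly_mult (?Q [^]\<^bsub>PR\<^esub> n) ?Q) = lead_coeff (?Q [^]\<^bsub>PR\<^esub> n) \<otimes> lead_coeff ?Q"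
      using poly_mult_lead_coeff[OF carrier_is_subring, of "?Q [^]\<^bsub>PR\<^esub> n" ?Q]
        polynomial_pow_not_zero[OF Q, of n] Q P.nat_pow_closed[OF Q, of n]
      by (simp add: univ_poly_carrier)
    ultimately show ?case using Suc by simp
  qed
  show "roots (?Q [^]\<^bsub>PR\<^esub> n) = replicate_mset n c"
  proof (induction n)
    case 0 then show ?case using degree_zero_imp_empty_roots[of "[\<one>]"]
      by (simp add: univ_poly_one univ_poly_carrier[symmetric] polynomial_def)
  next
    case (Suc n)
    have "?Q [^]\<^bsub>PR\<^esub> Suc n = ?Q \<otimes>\<^bsub>PR\<^esub> (?Q [^]\<^bsub>PR\<^esub> n)"
      using Q P.nat_pow_Suc2 by simp
    then show ?case
      using poly_mult_degree_one_monic_imp_same_roots[OF c P.nat_pow_closed[OF Q, of n]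
          polynomial_pow_not_zero[OF Q, of n]] Suc by simp
  qed
  assume x: "x \<in> carrier R"
  interpret E: ring_hom_cring PR R "\<lambda>q. eval q x"
    using eval_cring_hom[OF carrier_is_subring x] .
  show "eval (?Q [^]\<^bsub>PR\<^esub> n) x = (x \<ominus> c) [^] n"
    using E.hom_pow[OF Q] Q_eval[OF c x] by simp
qed


lemma pow_mult_c: "x \<in> carrier R \<Longrightarrow> y \<in> carrier R \<Longrightarrow> (x \<otimes> y) [^] (n::nat) = x [^] n \<otimes> y [^] n"
  by (induction n) (simp_all add: m_ac)

lemma size_single_support: "set_mset A \<subseteq> {c} \<Longrightarrow> size A = count A c"
  by (induction A rule: multiset_induct) auto

lemma bezout_pd:
  assumes "0 < d" "d < p"
  shows "\<exists>x y. d * x = p * y + 1"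
proof -
  have "\<not> p dvd d" using assms by (auto dest: dvd_imp_le)
  then have "coprime p d" using prime_imp_coprime[OF p_prime] by blast
  then have "gcd d p = 1" by (simp add: coprime_iff_gcd_eq_1 gcd.commute)
  then show ?thesis using bezout_nat[of d p] assms by auto
qed

lemma KL:
  assumes E: "subfield E R" and c: "c \<in> carrier R" and cE: "c \<notin> E" and fc: "frob c \<in> E"
  shows "dimension p E (simple_extension E c)"
proof -
  interpret P: domain PR by (rule PR_domain)
  let ?Q = "[\<one>, \<ominus> c]"
  let ?P = "?Q [^]\<^bsub>PR\<^esub> p"
  let ?I = "Irr E c"
  have Esub: "subring E R" using subfieldE(1)[OF E] .
  have Ec: "E \<subseteq> carrier R" using subfieldE(3)[OF E] .
  have zE: "\<zero> \<in> E" "\<one> \<in> E" using subringE(2,3)[OF Esub] by auto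
  have c0: "c \<noteq> \<zero>" using cE zE by auto
  have a: "c [^] p \<in> E" using fc unfolding frob_def .
  have cp0: "c [^] p \<noteq> \<zero>" using pow_nonzero[OF c c0] .
  have XE: "[\<one>, \<zero>] \<in> carrier (E[X])"
    using zE by (simp add: univ_poly_carrier[symmetric] polynomial_def)
  have XP: "[\<one>, \<zero>] \<in> carrier PR"
    by (simp add: univ_poly_carrier[symmetric] polynomial_def)
  have CP: "[\<ominus> c] \<in> carrier PR" using c c0
    by (simp add: univ_poly_carrier[symmetric] polynomial_def)
  have QX: "?Q = [\<one>, \<zero>] \<oplus>\<^bsub>PR\<^esub> [\<ominus> c]"
    using c by (simp add: univ_poly_add)
  have Peq: "?P = [\<one>, \<zero>] [^]\<^bsub>PR\<^esub> p \<oplus>\<^bsub>PR\<^esub> [\<ominus> c] [^]\<^bsub>PR\<^esub> p"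
    unfolding QX by (rule PR_freshman[OF XP CP])
  have pc: "poly_of_const (\<ominus> c) = [\<ominus> c]" using c c0 by (simp add: poly_of_const_def)
  have "[\<ominus> c] [^]\<^bsub>PR\<^esub> p = poly_of_const ((\<ominus> c) [^] p)"
    using ring_hom_ring.hom_nat_pow[OF poc_rhr, of "\<ominus> c" p] c pc by simp
  also have "(\<ominus> c) [^] p = \<ominus> (c [^] p)" using freshman_minus[OF p_prime charp c] .
  also have "poly_of_const (\<ominus> (c [^] p)) = [\<ominus> (c [^] p)]"
    using c cp0 by (simp add: poly_of_const_def)
  finally have Cpow: "[\<ominus> c] [^]\<^bsub>PR\<^esub> p = [\<ominus> (c [^] p)]" .
  have naE: "\<ominus> (c [^] p) \<in> E" using subringE(5)[OF Esub a] .
  have naE2: "[\<ominus> (c [^] p)] \<in> carrier (E[X])"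
    using naE cp0 c by (simp add: univ_poly_carrier[symmetric] polynomial_def)
  interpret EX: ring "E[X]" using univ_poly_is_ring[OF Esub] .
  have XpE: "[\<one>, \<zero>] [^]\<^bsub>PR\<^esub> p \<in> carrier (E[X])"
    using EX.nat_pow_closed[OF XE, of p] univ_pow_eq[of E "[\<one>, \<zero>]" p] by simp
  have PE: "?P \<in> carrier (E[X])"
    using EX.add.m_closed[OF XpE naE2] univ_add_eq[of E] Peq Cpow by simp
  have Pne: "?P \<noteq> []" using Qpow(2)[OF c] .
  have Pev: "eval ?P c = \<zero>"
  proof -
    have "c \<ominus> c = \<zero>" using c by (simp add: r_right_minus_eq)
    moreover have "p \<noteq> 0" using p_pos by simp
    ultimately show ?thesis using Qpow(6)[OF c c, of p] by (simp add: nat_pow_zero)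
  qed
  have alg: "(algebraic over E) c" using algebraicI[OF PE Pne Pev] .
  note I = IrrE[OF E c alg]
  have div: "?I pdivides ?P" using Irr_minimal[OF E c alg PE Pev] .
  have dle: "degree ?I \<le> p"
    using pdivides_imp_degree_le[OF Esub I(1) PE Pne div] Qpow(3)[OF c] by simp
  have dge1: "degree ?I \<ge> 1" using pirreducible_degree[OF E I(1,2)] .
  have "degree ?I \<ge> p"
  proof (rule ccontr)
    assume "\<not> p \<le> degree ?I"
    then have dlt: "degree ?I < p" by simp
    define d where "d = degree ?I"
    have IPR: "?I \<in> carrier PR"
      using I(1) carrier_polynomial[OF Esub] by (simp add: univ_poly_carrier[symmetric])
    have splP: "splitted ?P" unfolding splitted_def using Qpow(3,5)[OF c] by simp
    have splI: "splitted ?I"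
      using pdivides_imp_splitted[OF IPR Qpow(1,2)[OF c] splP div] .
    have incl: "roots ?I \<subseteq># replicate_mset p c"
      using pdivides_imp_roots_incl[OF IPR Qpow(1,2)[OF c] div] Qpow(5)[OF c] by simp
    have "set_mset (roots ?I) \<subseteq> {c}"
      using set_mset_mono[OF incl] by (auto split: if_splits)
    then have "count (roots ?I) c = d"
      using size_single_support splI unfolding splitted_def d_def by metis
    then have am: "alg_mult ?I c = d" using alg_mult_eq_count_roots[OF IPR] by simp
    have dv: "?Q [^]\<^bsub>PR\<^esub> d pdivides ?I"
      using le_alg_mult_imp_pdivides[OF c IPR] am by simp
    then obtain g where g: "g \<in> carrier PR" and Ig: "?I = ?Q [^]\<^bsub>PR\<^esub> d \<otimes>\<^bsub>PR\<^esub> g"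
      unfolding pdivides_def factor_def by blast
    have Ine: "?I \<noteq> []" using dge1 by auto
    have gne: "g \<noteq> []"
    proof
      assume "g = []"
      then have "?I = ?Q [^]\<^bsub>PR\<^esub> d \<otimes>\<^bsub>PR\<^esub> \<zero>\<^bsub>PR\<^esub>" using Ig by (simp add: univ_poly_zero)
      then have "?I = \<zero>\<^bsub>PR\<^esub>" using Qpow(1)[OF c] by simp
      then show False using Ine by (simp add: univ_poly_zero)
    qed
    have "degree ?I = degree (?Q [^]\<^bsub>PR\<^esub> d) + degree g"
      using Ig poly_mult_degree_eq[OF carrier_is_subring, of "?Q [^]\<^bsub>PR\<^esub> d" g] Qpow(1,2)[OF c] g gne
      by (simp add: univ_poly_mult univ_poly_carrier)
    then have dg: "degree g = 0" using Qpow(3)[OF c] d_def by simp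
    have "lead_coeff ?I = lead_coeff (?Q [^]\<^bsub>PR\<^esub> d) \<otimes> lead_coeff g"
      using Ig poly_mult_lead_coeff[OF carrier_is_subring, of "?Q [^]\<^bsub>PR\<^esub> d" g] Qpow(1,2)[OF c] g gne
      by (simp add: univ_poly_mult univ_poly_carrier)
    moreover have "lead_coeff g \<in> carrier R"
    proof -
      have "set g \<subseteq> carrier R" using g polynomial_incl by (simp add: univ_poly_carrier[symmetric])
      then show ?thesis using gne by (cases g) auto
    qed
    ultimately have "lead_coeff g = \<one>" using I(3) Qpow(4)[OF c] by simp
    then have "g = [\<one>]" using dg gne by (cases g) auto
    then have Id: "?I = ?Q [^]\<^bsub>PR\<^esub> d"
      using Ig P.r_one[OF Qpow(1)[OF c, of d]] by (simp add: univ_poly_one)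
    have "eval ?I \<zero> = (\<zero> \<ominus> c) [^] d" unfolding Id using Qpow(6)[OF c, of \<zero> d] by simp
    also have "(\<zero> \<ominus> c) = \<ominus> c" using c by (simp add: a_minus_def)
    finally have ev: "eval ?I \<zero> = (\<ominus> c) [^] d" .
    have "set ?I \<subseteq> E" using I(1) polynomial_incl by (simp add: univ_poly_carrier[symmetric])
    then have "eval ?I \<zero> \<in> E"
      using ring.eval_in_carrier[OF subring_is_ring[OF Esub], of ?I \<zero>] zE eval_consistent[OF Esub] by simp
    then have mcd: "(\<ominus> c) [^] d \<in> E" using ev by simp
    have m1: "(\<ominus> \<one>) [^] d \<in> E" using sub_pow_closed[OF Esub] subringE(5)[OF Esub zE(2)] by blast
    have "(\<ominus> c) [^] d \<otimes> (\<ominus> \<one>) [^] d = (\<ominus> c \<otimes> \<ominus> \<one>) [^] d"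
      using c pow_mult_c[of "\<ominus> c" "\<ominus> \<one>" d] by simp
    also have "\<ominus> c \<otimes> \<ominus> \<one> = c" using c by (simp add: r_minus l_minus)
    finally have cdE: "c [^] d \<in> E" using mcd m1 subringE(6)[OF Esub] by metis
    have "0 < d" "d < p" using dge1 dlt d_def by simp_all
    then obtain x y where xy: "d * x = p * y + 1" using bezout_pd by blast
    have e1: "c [^] (d * x) \<in> E" using sub_pow_closed[OF Esub cdE, of x] c by (simp add: nat_pow_pow)
    have e2: "c [^] (p * y) \<in> E" using sub_pow_closed[OF Esub a, of y] c by (simp add: nat_pow_pow)
    have nz: "c [^] (p * y) \<noteq> \<zero>" using pow_nonzero[OF c c0] .
    have "c [^] (d * x) = c [^] (p * y) \<otimes> c" using xy c by (simp add: nat_pow_mult[symmetric])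
    then have "inv (c [^] (p * y)) \<otimes> c [^] (d * x) = c"
      using c nz by (simp add: m_assoc[symmetric] field_Units)
    moreover have "inv (c [^] (p * y)) \<in> E" using subfield_m_inv(1)[OF E, of "c [^] (p * y)"] e2 nz by simp
    ultimately have "c \<in> E" using e1 subringE(6)[OF Esub] by metis
    then show False using cE by simp
  qed
  then have "degree ?I = p" using dle by simp
  then show ?thesis using dimension_simple_extension[OF E c alg] by simp
qed

end



context pfield begin

lemma subalg_of_subring:
  assumes B: "subfield B R" and L: "subring L R" and BL: "B \<subseteq> L"
  shows "subalgebra B L R"
proof (rule subalgebra.intro)
  show "subgroup L (add_monoid R)" using subring.axioms(1)[OF L] .
  show "subalgebra_axioms B L R"
    by (rule subalgebra_axioms.intro) (use subringE(6)[OF L] BL in blast)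
qed

lemma fd_larger:
  assumes B: "subfield B R" and F1: "subfield F1 R" and L: "subring L R"
    and BF: "B \<subseteq> F1" and FL: "F1 \<subseteq> L" and fin: "finite_dimension B L"
  shows "finite_dimension F1 L"
proof -
  obtain n where n: "dimension n B L" using fin by (auto simp: finite_dimension_def)
  obtain Us where Us: "set Us \<subseteq> carrier R" "independent B Us" "length Us = n" "Span B Us = L"
    using exists_base[OF B n] by blast
  have UL: "set Us \<subseteq> L" using Span_base_incl[OF B Us(1)] Us(4) by simp
  have "Span B Us \<subseteq> Span F1 Us"
    unfolding Span_eq_combine_set[OF B Us(1)] Span_eq_combine_set[OF F1 Us(1)] using BF by blast
  moreover have "Span F1 Us \<subseteq> L"
    using subalgebra_Span_incl[OF F1 subalg_of_subring[OF F1 L FL] UL] .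
  ultimately have "Span F1 Us = L" using Us(4) by simp
  then show ?thesis using Span_finite_dimension[OF F1 Us(1)] by simp
qed

lemma dim1_eq:
  assumes F: "subfield F R" and FE: "F \<subseteq> E" and E: "E \<subseteq> carrier R" and d: "dimension 1 F E"
  shows "E = F"
proof (rule ccontr)
  assume "E \<noteq> F"
  then obtain e where e: "e \<in> E" "e \<notin> F" using FE by blast
  have one: "\<one> \<in> F" using subringE(3)[OF subfieldE(1)[OF F]] .
  have ec: "e \<in> carrier R" using e E by blast
  have i1: "independent F [\<one>]"
    by (rule independent.li_Cons) auto
  have "e \<notin> Span F [\<one>]"
  proof
    assume "e \<in> Span F [\<one>]"
    then obtain k v where "k \<in> F" "v \<in> {\<zero>}" "e = k \<otimes> \<one> \<oplus> v"
      using line_extension_mem_iff by auto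
    then have "e = k" using subfieldE(3)[OF F] by auto
    then show False using e \<open>k \<in> F\<close> by simp
  qed
  then have "independent F [e, \<one>]" using independent.li_Cons[OF ec _ i1] by simp
  moreover have "set [e, \<one>] \<subseteq> E" using e one FE by auto
  ultimately have "length [e, \<one>] \<le> 1" using independent_length_le_dimension[OF F d] by blast
  then show False by simp
qed

lemma dim_pos:
  assumes F: "subfield F R" and "dimension k F M" and "\<one> \<in> M"
  shows "k > 0"
proof (rule ccontr)
  assume "\<not> 0 < k"
  then have "M = {\<zero>}" using dimension_zero[OF F] assms by auto
  then show False using assms by simp
qed

lemma frob_dim:
  assumes K: "subfield K R" and E: "E \<subseteq> carrier R" and d: "dimension n K E"
  shows "dimension n (frob ` K) (frob ` E)"
proof -
  have "inj_on frob E" using frob_inj E inj_on_subset by blast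
  then show ?thesis using ring_hom_ring.inj_hom_dimension[OF frob_rhr K one_neq_zero] d by blast
qed

end



context pfield begin

lemma KL_ext:
  assumes E: "subfield E R" and c: "c \<in> carrier R" and cE: "c \<notin> E" and fc: "frob c \<in> E"
  shows "subfield (simple_extension E c) R" "E \<subseteq> simple_extension E c" "c \<in> simple_extension E c"
    "dimension p E (simple_extension E c)"
proof -
  show d: "dimension p E (simple_extension E c)" using KL[OF assms] .
  have "(algebraic over E) c"
    using finite_dimension_simple_extension[OF E c] finite_dimensionI[OF d] by simp
  then show "subfield (simple_extension E c) R" using simple_extension_is_subfield[OF E c] by simp
  show "E \<subseteq> simple_extension E c" using simple_extension_incl[OF subfieldE(3)[OF E] c] .
  show "c \<in> simple_extension E c" using simple_extension_mem[OF subfieldE(1)[OF E] c] .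
qed

lemma COMP_aux:
  assumes B: "subfield B R" and F: "subfield F R" and L: "subfield L R"
    and BF: "B \<subseteq> F" and FL: "F \<subseteq> L" and frobL: "\<And>x. x \<in> L \<Longrightarrow> frob x \<in> B"
    and fin: "finite_dimension B L"
  shows "subfield F' R \<Longrightarrow> F \<subseteq> F' \<Longrightarrow> F' \<subseteq> L \<Longrightarrow> subfield M0 R \<Longrightarrow> B \<subseteq> M0 \<Longrightarrow> M0 \<subseteq> F' \<Longrightarrow>
    F' \<subseteq> generate_field R (M0 \<union> F) \<Longrightarrow> dimension k B M0 \<Longrightarrow> dimension k F F' \<Longrightarrow> dimension t F' L \<Longrightarrow>
    \<exists>M k. subfield M R \<and> B \<subseteq> M \<and> M \<subseteq> L \<and> L \<subseteq> generate_field R (M \<union> F) \<and>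
      dimension k B M \<and> dimension k F L"
proof (induction t arbitrary: F' M0 k rule: less_induct)
  case (less t)
  note F' = less.prems(1) and FF' = less.prems(2) and F'L = less.prems(3) and M0 = less.prems(4)
    and BM0 = less.prems(5) and M0F' = less.prems(6) and gen = less.prems(7)
    and dk1 = less.prems(8) and dk2 = less.prems(9) and dt = less.prems(10)
  have Lc: "L \<subseteq> carrier R" using subfieldE(3)[OF L] .
  show ?case
  proof (cases "F' = L")
    case True
    then show ?thesis using M0 BM0 M0F' gen dk1 dk2 by blast
  next
    case False
    then obtain c where cL: "c \<in> L" and cF': "c \<notin> F'" using F'L by blast
    have c: "c \<in> carrier R" using cL Lc by blast
    have fcB: "frob c \<in> B" using frobL cL .
    have cM0: "c \<notin> M0" using cF' M0F' by blast
    define M1 where "M1 = simple_extension M0 c"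
    define F1 where "F1 = simple_extension F' c"
    have fcM0: "frob c \<in> M0" using fcB BM0 by blast
    have fcF': "frob c \<in> F'" using fcM0 M0F' by blast
    note KM = KL_ext[OF M0 c cM0 fcM0, folded M1_def]
    note KF = KL_ext[OF F' c cF' fcF', folded F1_def]
    have F1L: "F1 \<subseteq> L"
      unfolding F1_def using simple_extension_subring_incl[OF subfieldE(1)[OF L] F'L cL] .
    have M1F1: "M1 \<subseteq> F1"
      unfolding M1_def using simple_extension_subring_incl[OF subfieldE(1)[OF KF(1)]] M0F' KF(2,3) by blast
    have BM1: "B \<subseteq> M1" using BM0 KM(2) by blast
    have Gsub: "subfield (generate_field R (M1 \<union> F)) R"
      using gen_subfield subfieldE(3)[OF KM(1)] subfieldE(3)[OF F] by auto
    have "generate_field R (M0 \<union> F) \<subseteq> generate_field R (M1 \<union> F)"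
      using gen_mono[of "M0 \<union> F" "M1 \<union> F"] KM(2) subfieldE(3)[OF KM(1)] subfieldE(3)[OF F] by auto
    then have F'G: "F' \<subseteq> generate_field R (M1 \<union> F)" using gen by blast
    have cG: "c \<in> generate_field R (M1 \<union> F)" using KM(3) gen_incl by blast
    have gen1: "F1 \<subseteq> generate_field R (M1 \<union> F)"
      unfolding F1_def using simple_extension_subring_incl[OF subfieldE(1)[OF Gsub] F'G cG] .
    have dk1': "dimension (k * p) B M1" using telescopic_base[OF B M0 dk1 KM(4)] .
    have dk2': "dimension (k * p) F F1" using telescopic_base[OF F F' dk2 KF(4)] .
    have FF1: "F \<subseteq> F1" using FF' KF(2) by blast
    have "finite_dimension F1 L"
      using fd_larger[OF B KF(1) subfieldE(1)[OF L] _ F1L fin] BF FF1 by blast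
    then obtain t' where dt': "dimension t' F1 L" by (auto simp: finite_dimension_def)
    have "dimension (p * t') F' L" using telescopic_base[OF F' KF(1) KF(4) dt'] .
    then have tt: "t = p * t'" using dimension_is_inj[OF F' dt] by simp
    have "t' > 0" using dim_pos[OF KF(1) dt'] subringE(3)[OF subfieldE(1)[OF L]] by simp
    moreover have "p > 1" using p_prime prime_gt_1_nat by simp
    ultimately have "t' < t" using tt by simp
    then show ?thesis
      using less.IH[OF _ KF(1) FF1 F1L KM(1) BM1 M1F1 gen1 dk1' dk2' dt'] by blast
  qed
qed

lemma COMP:
  assumes B: "subfield B R" and F: "subfield F R" and L: "subfield L R"
    and BF: "B \<subseteq> F" and FL: "F \<subseteq> L" and frobL: "\<And>x. x \<in> L \<Longrightarrow> frob x \<in> B"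
    and fin: "finite_dimension B L"
  shows "\<exists>M k. subfield M R \<and> B \<subseteq> M \<and> M \<subseteq> L \<and> L \<subseteq> generate_field R (M \<union> F) \<and>
      dimension k B M \<and> dimension k F L"
proof -
  have "finite_dimension F L" using fd_larger[OF B F subfieldE(1)[OF L] BF FL fin] .
  then obtain t where dt: "dimension t F L" by (auto simp: finite_dimension_def)
  have g: "F \<subseteq> generate_field R (B \<union> F)" using gen_incl by blast
  show ?thesis
    using COMP_aux[OF assms F order.refl FL B order.refl BF g dimension_one[OF B] dimension_one[OF F] dt] .
qed

end



context pfield begin

lemma FI1: "frob_image R p (Suc 0) = frob ` carrier R"
  using frob_image_Suc[of 0] frob_image_0 by simp

lemma perfect_core_sub: "perfect_core R p \<subseteq> frob ` carrier R"
  unfolding perfect_core_def using FI1 by blast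

lemma fin_Kp:
  assumes "\<exists>S. finite S \<and> S \<subseteq> carrier R \<and> generate_field R (perfect_core R p \<union> S) = carrier R"
  shows "finite_dimension (frob ` carrier R) (carrier R)"
proof -
  obtain S where S: "finite S" "S \<subseteq> carrier R" "generate_field R (perfect_core R p \<union> S) = carrier R"
    using assms by blast
  obtain xs where xs: "set xs = S" using finite_list[OF S(1)] by blast
  let ?Kp = "frob ` carrier R"
  have Kp: "subfield ?Kp R" using frob_subfield[OF carrier_is_subfield] .
  have xsc: "set xs \<subseteq> carrier R" using xs S by simp
  have alg: "\<And>x. x \<in> set xs \<Longrightarrow> (algebraic over ?Kp) x"
  proof -
    fix x assume "x \<in> set xs"
    then have x: "x \<in> carrier R" using xsc by blast
    show "(algebraic over ?Kp) x"
    proof (cases "x \<in> ?Kp")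
      case True then show ?thesis using algebraic_self[OF subfieldE(1)[OF Kp]] by simp
    next
      case False
      have "frob x \<in> ?Kp" using x by simp
      then have d: "dimension p ?Kp (simple_extension ?Kp x)" using KL[OF Kp x False] by simp
      then show ?thesis using finite_dimension_simple_extension[OF Kp x] finite_dimensionI[OF d] by simp
    qed
  qed
  have sub: "subfield (finite_extension ?Kp xs) R" using finite_extension_is_subfield[OF Kp xsc alg] .
  have fd: "finite_dimension ?Kp (finite_extension ?Kp xs)"
    using finite_extension_finite_dimension(1)[OF Kp xsc alg] .
  have "perfect_core R p \<union> S \<subseteq> finite_extension ?Kp xs"
    using perfect_core_sub finite_extension_incl[OF subfieldE(3)[OF Kp] xsc]
      finite_extension_mem[OF subfieldE(1)[OF Kp] xsc] xs by blast
  then have "carrier R \<subseteq> finite_extension ?Kp xs" using gen_min[OF sub] S(3) by blast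
  moreover have "finite_extension ?Kp xs \<subseteq> carrier R" using subfieldE(3)[OF sub] .
  ultimately show ?thesis using fd by simp
qed

lemma STEP:
  assumes Kfin: "finite_dimension (frob ` carrier R) (carrier R)"
    and L: "subfield L R" and FL: "frob_image R p (Suc m) \<subseteq> L"
    and LK: "finite_dimension L (carrier R)"
    and dG: "dimension (p ^ r) L (generate_field R (L \<union> frob_image R p m))"
  shows "\<exists>M. subfield M R \<and> frob_image R p (Suc (Suc m)) \<subseteq> M \<and> M \<subseteq> L \<and>
    generate_field R (M \<union> frob_image R p (Suc m)) = L \<and> dimension (p ^ r) M L \<and>
    finite_dimension M (carrier R)"
proof -
  let ?B = "frob ` L"
  let ?G = "generate_field R (L \<union> frob_image R p m)"
  let ?F = "frob ` ?G"
  have Lc: "L \<subseteq> carrier R" using subfieldE(3)[OF L] .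
  have FIc: "frob_image R p m \<subseteq> carrier R" using frob_image_carrier .
  have B: "subfield ?B R" using frob_subfield[OF L] .
  have G: "subfield ?G R" using gen_subfield Lc FIc by auto
  have Gc: "?G \<subseteq> carrier R" using subfieldE(3)[OF G] .
  have F: "subfield ?F R" using frob_subfield[OF G] .
  have LG: "L \<subseteq> ?G" using gen_incl by blast
  have BF: "?B \<subseteq> ?F" using LG by blast
  have BL: "?B \<subseteq> L" using frob_in_subfield[OF L] by blast
  have "?F \<subseteq> generate_field R (frob ` (L \<union> frob_image R p m))"
    using frob_gen Lc FIc by (metis le_sup_iff)
  also have "frob ` (L \<union> frob_image R p m) = ?B \<union> frob_image R p (Suc m)"
    using frob_image_Suc by (simp add: image_Un)
  finally have FBG: "?F \<subseteq> generate_field R (?B \<union> frob_image R p (Suc m))" .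
  have FL': "?F \<subseteq> L" using FBG gen_min[OF L, of "?B \<union> frob_image R p (Suc m)"] BL FL by blast
  have frobL: "\<And>x. x \<in> L \<Longrightarrow> frob x \<in> ?B" by blast
  obtain d where dLK: "dimension d L (carrier R)" using LK by (auto simp: finite_dimension_def)
  obtain D where dK: "dimension D (frob ` carrier R) (carrier R)" using Kfin by (auto simp: finite_dimension_def)
  have "dimension d ?B (frob ` carrier R)" using frob_dim[OF L _ dLK] by simp
  then have "dimension (d * D) ?B (carrier R)"
    using telescopic_base[OF B frob_subfield[OF carrier_is_subfield] _ dK] by simp
  then have finBK: "finite_dimension ?B (carrier R)" using finite_dimensionI by blast
  have finBL: "finite_dimension ?B L"
    using subalbegra_incl_imp_finite_dimension[OF B finBK subalg_of_subring[OF B subfieldE(1)[OF L] BL] Lc] .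
  have dBF: "dimension (p ^ r) ?B ?F" using frob_dim[OF L Gc dG] .
  obtain M k where M: "subfield M R" "?B \<subseteq> M" "M \<subseteq> L" "L \<subseteq> generate_field R (M \<union> ?F)"
    and dk1: "dimension k ?B M" and dk2: "dimension k ?F L"
    using COMP[OF B F L BF FL' frobL finBL] by blast
  have Mc: "M \<subseteq> carrier R" using subfieldE(3)[OF M(1)] .
  have dBL: "dimension (p ^ r * k) ?B L" using telescopic_base[OF B F dBF dk2] .
  have "finite_dimension M L" using fd_larger[OF B M(1) subfieldE(1)[OF L] M(2,3) finBL] .
  then obtain t where dt: "dimension t M L" by (auto simp: finite_dimension_def)
  have "dimension (k * t) ?B L" using telescopic_base[OF B M(1) dk1 dt] .
  then have eq: "p ^ r * k = k * t" using dimension_is_inj[OF B dBL] by simp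
  have "k > 0" using dim_pos[OF B dk1] subringE(3)[OF subfieldE(1)[OF M(1)]] by simp
  then have tr: "t = p ^ r" using eq by simp
  have FI2: "frob_image R p (Suc (Suc m)) \<subseteq> M"
    using frob_image_Suc[of "Suc m"] FL M(2) by blast
  have FI1c: "frob_image R p (Suc m) \<subseteq> carrier R" using frob_image_carrier .
  have Hsub: "subfield (generate_field R (M \<union> frob_image R p (Suc m))) R"
    using gen_subfield Mc FI1c by auto
  have "?B \<union> frob_image R p (Suc m) \<subseteq> M \<union> frob_image R p (Suc m)" using M(2) by blast
  then have "generate_field R (?B \<union> frob_image R p (Suc m)) \<subseteq> generate_field R (M \<union> frob_image R p (Suc m))"
    using gen_mono Mc FI1c by (metis le_sup_iff)
  then have "M \<union> ?F \<subseteq> generate_field R (M \<union> frob_image R p (Suc m))"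
    using FBG gen_incl[of "M \<union> frob_image R p (Suc m)"] by blast
  then have "generate_field R (M \<union> ?F) \<subseteq> generate_field R (M \<union> frob_image R p (Suc m))"
    using gen_min[OF Hsub] by blast
  then have g1: "L \<subseteq> generate_field R (M \<union> frob_image R p (Suc m))" using M(4) by blast
  have g2: "generate_field R (M \<union> frob_image R p (Suc m)) \<subseteq> L"
    using gen_min[OF L] M(3) FL by blast
  have "finite_dimension M (carrier R)"
    using telescopic_base_dim(1)[OF M(1) L \<open>finite_dimension M L\<close> LK] .
  then show ?thesis using M(1,3) FI2 g1 g2 dt tr by blast
qed

end



context pfield begin

lemma local_tower:
  assumes sub: "\<And>i. subfield (T i) R" and FI: "\<And>i. frob_image R p i \<subseteq> T i"
    and step: "\<And>i. T i = generate_field R (T (Suc i) \<union> frob_image R p i)"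
  shows "power_tower R p T"
proof -
  have key: "T j = generate_field R (T (j + d) \<union> frob_image R p j)" for d j
  proof (induction d arbitrary: j)
    case 0
    show ?case using gen_absorb[OF sub FI] by simp
  next
    case (Suc d)
    have Tc: "T (Suc j + d) \<subseteq> carrier R" using subfieldE(3)[OF sub] by blast
    have "T j = generate_field R (T (Suc j) \<union> frob_image R p j)" using step .
    also have "T (Suc j) = generate_field R (T (Suc j + d) \<union> frob_image R p (Suc j))" using Suc .
    also have "generate_field R (generate_field R (T (Suc j + d) \<union> frob_image R p (Suc j)) \<union> frob_image R p j)
        = generate_field R ((T (Suc j + d) \<union> frob_image R p (Suc j)) \<union> frob_image R p j)"
      using gen_gen Tc frob_image_carrier by (metis le_sup_iff)
    also have "(T (Suc j + d) \<union> frob_image R p (Suc j)) \<union> frob_image R p j = T (j + Suc d) \<union> frob_image R p j"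
      using frob_image_mono_Suc[of j] by auto
    finally show ?case .
  qed
  show ?thesis unfolding power_tower_def composite_def
  proof (intro conjI allI impI)
    fix i show "subfield (T i) R" using sub .
  next
    fix i j :: nat assume "j \<le> i"
    then obtain d where "i = j + d" using le_Suc_ex by blast
    then show "T j = generate_field R (T i \<union> frob_image R p j)" using key by simp
  qed
qed

end

theorem main_proof:
  fixes R :: "('a, 'b) ring_scheme" and p n r :: nat and W :: "nat \<Rightarrow> 'a set"
  assumes "field R"
    and "Factorial_Ring.prime p"
    and "[p] \<cdot>\<^bsub>R\<^esub> \<one>\<^bsub>R\<^esub> = \<zero>\<^bsub>R\<^esub>"
    and "\<exists>S. finite S \<and> S \<subseteq> carrier R \<and>
           generate_field R (perfect_core R p \<union> S) = carrier R"
    and "n \<ge> 1"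
    and "n_foliation R p n r W"
  shows "\<exists>W'. inf_foliation R p r W' \<and> (\<forall>i\<le>n. W' i = W i)"
proof -
  have pf: "pfield R p" unfolding pfield_def pfield_axioms_def using assms(1-3) by simp
  interpret pfield R p by (rule pf)
  obtain n' where nn: "n = Suc n'" using assms(5) by (cases n) auto
  note nf = assms(6)[unfolded n_foliation_def power_tower_def tower_length_def ext_degree_def composite_def]
  have Wsub: "\<And>i. subfield (W i) R" using nf by blast
  have Wc: "\<And>i. W i \<subseteq> carrier R" using subfieldE(3)[OF Wsub] by blast
  have Wgen: "\<And>i j. j \<le> i \<Longrightarrow> W j = generate_field R (W i \<union> frob_image R p j)" using nf by blast
  have Wstab: "\<And>N. N \<ge> n \<Longrightarrow> W N = W n" using nf by blast
  have Wmin: "\<And>m. m < n \<Longrightarrow> \<not> (\<forall>N\<ge>m. W N = W m)" using nf by blast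
  have Wdim: "\<And>i. i < n \<Longrightarrow> dimension (p ^ r) (W (Suc i)) (W i)" using nf by blast
  have WFI: "frob_image R p i \<subseteq> W i" for i
  proof -
    have "frob_image R p i \<subseteq> generate_field R (W i \<union> frob_image R p i)"
      using gen_incl[of "W i \<union> frob_image R p i"] by blast
    also have "generate_field R (W i \<union> frob_image R p i) = W i" using Wgen[of i i] by (rule sym) simp
    finally show ?thesis .
  qed
  have Wstep: "W i = generate_field R (W (Suc i) \<union> frob_image R p i)" if "i < n" for i
    by (rule Wgen) simp
  have W0: "W 0 = carrier R" using WFI[of 0] frob_image_0 Wc[of 0] by blast
  have finW: "\<And>k. k \<le> n \<Longrightarrow> finite_dimension (W n) (W (n - k))"
  proof -
    fix k show "k \<le> n \<Longrightarrow> finite_dimension (W n) (W (n - k))"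
    proof (induction k)
      case 0 then show ?case using finite_dimensionI[OF dimension_one[OF Wsub]] by simp
    next
      case (Suc k)
      then have fk: "finite_dimension (W n) (W (n - k))" by simp
      have "n - k = Suc (n - Suc k)" using Suc.prems by simp
      then have "dimension (p ^ r) (W (n - k)) (W (n - Suc k))" using Wdim[of "n - Suc k"] Suc.prems by simp
      then show ?case using telescopic_base_dim(1)[OF Wsub Wsub fk finite_dimensionI] by blast
    qed
  qed
  have finWn: "finite_dimension (W n) (carrier R)" using finW[of n] W0 by simp
  have Kfin: "finite_dimension (frob ` carrier R) (carrier R)" using fin_Kp[OF assms(4)] .
  have r1: "r \<ge> 1"
  proof (rule ccontr)
    assume "\<not> r \<ge> 1"
    then have "r = 0" by simp
    then have "dimension 1 (W n) (W n')" using Wdim[of n'] nn by simp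
    moreover have "W n \<subseteq> W n'" using Wstep[of n'] nn gen_incl by (metis le_sup_iff lessI)
    ultimately have "W n' = W n" using dim1_eq[OF Wsub _ Wc] by blast
    have "\<forall>N\<ge>n'. W N = W n'"
    proof (intro allI impI)
      fix N assume "N \<ge> n'"
      then have "N = n' \<or> N \<ge> n" using nn by auto
      then show "W N = W n'"
      proof
        assume "N = n'" then show ?thesis by simp
      next
        assume "n \<le> N" then have "W N = W n" by (rule Wstab)
        then show ?thesis using \<open>W n' = W n\<close> by simp
      qed
    qed
    then show False using Wmin[of n'] nn by simp
  qed
  define Q where "Q = (\<lambda>m L M. subfield M R \<and> frob_image R p (Suc (Suc m)) \<subseteq> M \<and> M \<subseteq> L \<and>
    generate_field R (M \<union> frob_image R p (Suc m)) = L \<and> dimension (p ^ r) M L \<and>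
    finite_dimension M (carrier R))"
  define Inv where "Inv = (\<lambda>m L. subfield L R \<and> frob_image R p (Suc m) \<subseteq> L \<and>
    finite_dimension L (carrier R) \<and> dimension (p ^ r) L (generate_field R (L \<union> frob_image R p m)))"
  have stepI: "\<And>m L. Inv m L \<Longrightarrow> \<exists>M. Q m L M"
    unfolding Inv_def Q_def using STEP[OF Kfin] by blast
  have invQ: "\<And>m L M. Q m L M \<Longrightarrow> Inv (Suc m) M"
    unfolding Inv_def Q_def by auto
  define Ls where "Ls = rec_nat (W n) (\<lambda>m L. SOME M. Q (n' + m) L M)"
  have Ls0: "Ls 0 = W n" unfolding Ls_def by simp
  have LsS: "\<And>m. Ls (Suc m) = (SOME M. Q (n' + m) (Ls m) M)" unfolding Ls_def by simp
  have inv0: "Inv n' (W n)"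
    unfolding Inv_def using Wsub WFI finWn Wdim[of n'] Wstep[of n'] nn by simp
  have all: "\<And>m. Inv (n' + m) (Ls m) \<and> Q (n' + m) (Ls m) (Ls (Suc m))"
  proof -
    fix m show "Inv (n' + m) (Ls m) \<and> Q (n' + m) (Ls m) (Ls (Suc m))"
    proof (induction m)
      case 0
      have i: "Inv (n' + 0) (Ls 0)" using inv0 Ls0 by simp
      then have "Q (n' + 0) (Ls 0) (Ls (Suc 0))" unfolding LsS using stepI someI_ex by metis
      then show ?case using i by simp
    next
      case (Suc m)
      then have "Q (n' + m) (Ls m) (Ls (Suc m))" by simp
      then have "Inv (Suc (n' + m)) (Ls (Suc m))" by (rule invQ)
      then have i: "Inv (n' + Suc m) (Ls (Suc m))" by simp
      then have "Q (n' + Suc m) (Ls (Suc m)) (Ls (Suc (Suc m)))"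
        unfolding LsS[of "Suc m"] using stepI someI_ex by metis
      then show ?case using i by simp
    qed
  qed
  define W' where "W' = (\<lambda>i. if i \<le> n then W i else Ls (i - n))"
  have W'big: "\<And>i. i \<ge> n \<Longrightarrow> W' i = Ls (i - n)"
    unfolding W'_def using Ls0 by (auto simp: le_antisym)
  have sub': "\<And>i. subfield (W' i) R"
    unfolding W'_def using Wsub all unfolding Inv_def by auto
  have FI': "\<And>i. frob_image R p i \<subseteq> W' i"
  proof -
    fix i show "frob_image R p i \<subseteq> W' i"
    proof (cases "i \<le> n")
      case True then show ?thesis unfolding W'_def using WFI by simp
    next
      case False
      then have "Suc (n' + (i - n)) = i" using nn by simp
      then show ?thesis using all[of "i - n"] W'big[of i] False unfolding Inv_def by simp
    qed
  qed
  have step': "\<And>i. W' i = generate_field R (W' (Suc i) \<union> frob_image R p i) \<and>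
      dimension (p ^ r) (W' (Suc i)) (W' i)"
  proof -
    fix i show "W' i = generate_field R (W' (Suc i) \<union> frob_image R p i) \<and>
      dimension (p ^ r) (W' (Suc i)) (W' i)"
    proof (cases "i < n")
      case True
      then have "W' i = W i" "W' (Suc i) = W (Suc i)" unfolding W'_def by auto
      then show ?thesis using Wstep[OF True] Wdim[OF True] by simp
    next
      case False
      then have "Suc i - n = Suc (i - n)" by simp
      then have e: "W' i = Ls (i - n)" "W' (Suc i) = Ls (Suc (i - n))"
        using W'big[of i] W'big[of "Suc i"] False by simp_all
      have "Suc (n' + (i - n)) = i" using nn False by simp
      then show ?thesis using all[of "i - n"] e unfolding Q_def by simp
    qed
  qed
  have "power_tower R p W'" using local_tower[OF sub' FI'] step' by blast
  moreover have "\<forall>i. ext_degree R (W' i) (W' (Suc i)) (p ^ r)"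
    unfolding ext_degree_def using step' by blast
  ultimately have "inf_foliation R p r W'" unfolding inf_foliation_def using r1 by blast
  moreover have "\<forall>i\<le>n. W' i = W i" unfolding W'_def by simp
  ultimately show ?thesis by blast
qed


theorem mainTheorem14:
  fixes R :: "('a, 'b) ring_scheme" and p n r :: nat and W :: "nat \<Rightarrow> 'a set"
  assumes "field R"
    and "Factorial_Ring.prime p"
    and "[p] \<cdot>\<^bsub>R\<^esub> \<one>\<^bsub>R\<^esub> = \<zero>\<^bsub>R\<^esub>"
    and "\<exists>S. finite S \<and> S \<subseteq> carrier R \<and>
           generate_field R (perfect_core R p \<union> S) = carrier R"
    and "n \<ge> 1"
    and "n_foliation R p n r W"
  shows "\<exists>W'. inf_foliation R p r W' \<and> (\<forall>i\<le>n. W' i = W i)"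
  using main_proof[OF assms] .

end
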